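(* For each $\varepsilon>0$ there exists $y_0=y_0(\varepsilon)>2$ such that for every $y\in[2,y_0]$ and every $R>2$, the function $x\mapsto g_R(x,y)\,x^{-\varepsilon}$ is non-increasing on $(0,\infty)$.
   Context: Let $\xi$ be a nondecreasing $C^2$ function on $[0,\infty)$ with $\xi(x)=(x-1)^3\vee0$ for $x\in[0,3/2]$ and $\xi(x)=1$ for $x\ge2$. For $x\ge0$, $y\ge2$: $\zeta(x,y)=2x+(yx^{y-1}-2x)\xi(x)$. For $R>2$: $g_R(x,y)=\sqrt{(\partial_x\zeta)(x\wedge R,y)}$. *)

theory Defs
  imports "HOL-Analysis.Analysis"
begin

definition C2_on :: "real set \<Rightarrow> (real \<Rightarrow> real) \<Rightarrow> bool" where
  "C2_on S f \<longleftrightarrow> (\<exists>f' f''.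
      (\<forall>x\<in>S. (f has_real_derivative f' x) (at x within S)) \<and>
      (\<forall>x\<in>S. (f' has_real_derivative f'' x) (at x within S)) \<and>
      continuous_on S f'')"

definition admissible_xi :: "(real \<Rightarrow> real) \<Rightarrow> bool" where
  "admissible_xi \<xi> \<longleftrightarrow> mono_on {0..} \<xi> \<and> C2_on {0..} \<xi> \<and>
     (\<forall>x\<in>{0..3/2}. \<xi> x = max ((x - 1)^3) 0) \<and>
     (\<forall>x\<ge>2. \<xi> x = 1)"

definition zeta :: "(real \<Rightarrow> real) \<Rightarrow> real \<Rightarrow> real \<Rightarrow> real" where
  "zeta \<xi> x y = 2 * x + (y * x powr (y - 1) - 2 * x) * \<xi> x"

definition dzeta :: "(real \<Rightarrow> real) \<Rightarrow> real \<Rightarrow> real \<Rightarrow> real" where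
  "dzeta \<xi> x y = deriv (\<lambda>t. zeta \<xi> t y) x"

definition gR :: "(real \<Rightarrow> real) \<Rightarrow> real \<Rightarrow> real \<Rightarrow> real \<Rightarrow> real" where
  "gR \<xi> R x y = sqrt (dzeta \<xi> (min x R) y)"

end

theory Submission imports Defs begin

lemma zeta_deriv:
  fixes \<xi> f' :: "real \<Rightarrow> real" and x y :: real
  assumes "x > 0" and d: "(\<xi> has_real_derivative f' x) (at x)"
  shows "((\<lambda>t. zeta \<xi> t y) has_real_derivative
     2 + (y*(y-1)*x powr (y-2) - 2) * \<xi> x + (y * x powr (y-1) - 2*x) * f' x) (at x)"
  unfolding zeta_def using assms
  by (auto intro!: derivative_eq_intros)

lemma H_deriv:
  fixes \<xi> f' f'' :: "real \<Rightarrow> real" and x y :: real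
  assumes "x > 0" and d: "(\<xi> has_real_derivative f' x) (at x)"
   and d2: "(f' has_real_derivative f'' x) (at x)"
  shows "((\<lambda>t. 2 + (y*(y-1)*t powr (y-2) - 2) * \<xi> t + (y * t powr (y-1) - 2*t) * f' t) has_real_derivative
     y*(y-1)*(y-2)*x powr (y-3) * \<xi> x + 2*(y*(y-1)*x powr (y-2) - 2) * f' x + (y * x powr (y-1) - 2*x) * f'' x) (at x)"
  using assms
  by (auto intro!: derivative_eq_intros simp: algebra_simps)

lemma key_sqrt:
  fixes x1 x2 h1 h2 e :: real
  assumes "0<x1" "x1 \<le> x2" "0 \<le> h1" "0 \<le> h2" "h2 \<le> h1 * (x2/x1) powr (2*e)"
  shows "sqrt h2 * x2 powr (-e) \<le> sqrt h1 * x1 powr (-e)"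
proof -
  have x2: "0 < x2" using assms by linarith
  have "h2 * x2 powr (-2*e) \<le> h1 * (x2/x1) powr (2*e) * x2 powr (-2*e)"
    using assms(5) by (simp add: mult_right_mono)
  also have "\<dots> = h1 * x1 powr (-2*e)"
    using assms(1) x2 by (simp add: powr_divide powr_minus divide_simps)
  finally have le: "h2 * x2 powr (-2*e) \<le> h1 * x1 powr (-2*e)" .
  have q2: "x2 powr (-2*e) = (x2 powr (-e))^2"
    by (simp add: power2_eq_square powr_add[symmetric])
  have q1: "x1 powr (-2*e) = (x1 powr (-e))^2"
    by (simp add: power2_eq_square powr_add[symmetric])
  have "sqrt (h2 * x2 powr (-2*e)) \<le> sqrt (h1 * x1 powr (-2*e))"
    using le by simp
  then show ?thesis unfolding q1 q2 by (simp add: real_sqrt_mult)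
qed

lemma powr_lower:
  fixes x1 x2 e :: real
  assumes "0<x1" "x1 \<le> x2" "x2 \<le> 2" "e > 0"
  shows "1 + e*(x2-x1) \<le> (x2/x1) powr (2*e)"
proof -
  have x2: "0 < x2" using assms by linarith
  have "ln (x1/x2) \<le> x1/x2 - 1" using assms x2 by (intro ln_le_minus_one) simp
  hence "ln (x2/x1) \<ge> 1 - x1/x2" using assms x2 by (simp add: ln_div)
  moreover have "1 - x1/x2 = (x2-x1)/x2" using x2 by (simp add: field_simps)
  moreover have "(x2-x1)/x2 \<ge> (x2-x1)/2" using assms x2
    by (intro divide_left_mono) auto
  ultimately have l: "ln (x2/x1) \<ge> (x2-x1)/2" by linarith
  have "(x2/x1) powr (2*e) = exp (2*e*ln (x2/x1))" using assms x2 by (simp add: powr_def)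
  also have "\<dots> \<ge> 1 + 2*e*ln (x2/x1)" by (rule exp_ge_add_one_self)
  finally have f: "1 + 2*e*ln (x2/x1) \<le> (x2/x1) powr (2*e)" .
  have "2*e*((x2-x1)/2) \<le> 2*e*ln(x2/x1)" using l assms by (intro mult_left_mono) auto
  then show ?thesis using f by simp
qed


theorem mainTheorem19:
  fixes \<xi> :: "real \<Rightarrow> real" and \<epsilon> :: real
  assumes "admissible_xi \<xi>" and "\<epsilon> > 0"
  shows "\<exists>y0 > 2. \<forall>y\<in>{2..y0}. \<forall>R > 2. \<forall>x1 x2.
           0 < x1 \<and> x1 \<le> x2 \<longrightarrow>
           gR \<xi> R x2 y * x2 powr (- \<epsilon>) \<le> gR \<xi> R x1 y * x1 powr (- \<epsilon>)"
proof -
  from assms(1) obtain f' f'' where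
    D1: "\<forall>x\<in>{0..}. (\<xi> has_real_derivative f' x) (at x within {0..})" and
    D2: "\<forall>x\<in>{0..}. (f' has_real_derivative f'' x) (at x within {0..})" and
    C: "continuous_on {0..} f''" and
    mono: "mono_on {0..} \<xi>" and
    xi01: "\<forall>x\<in>{0..3/2}. \<xi> x = max ((x-1)^3) 0" and
    xi2: "\<forall>x\<ge>2. \<xi> x = 1"
    unfolding admissible_xi_def C2_on_def by blast
  have d1: "(\<xi> has_real_derivative f' x) (at x)" if x: "0<x" for x
  proof -
    have e: "at x within {0..} = at x" using x by (rule_tac at_within_interior) auto
    have "(\<xi> has_real_derivative f' x) (at x within {0..})" using D1 x by auto
    thus ?thesis unfolding e .
  qed
  have d2: "(f' has_real_derivative f'' x) (at x)" if x: "0<x" for x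
  proof -
    have e: "at x within {0..} = at x" using x by (rule_tac at_within_interior) auto
    have "(f' has_real_derivative f'' x) (at x within {0..})" using D2 x by auto
    thus ?thesis unfolding e .
  qed
  have xi0: "\<xi> 0 = 0" using xi01 by simp
  have xinn: "0 \<le> \<xi> x" if "0 \<le> x" for x
    using mono_onD[OF mono, of 0 x] that xi0 by simp
  have xile: "\<xi> x \<le> 1" if "0 \<le> x" for x
  proof (cases "x \<le> 2")
    case True thus ?thesis using mono_onD[OF mono, of x 2] that xi2 by simp
  next
    case False thus ?thesis using xi2 by simp
  qed
  have xz: "\<xi> x = 0" if "0 \<le> x" "x \<le> 1" for x
  proof -
    have "(x-1)^3 \<le> 0" using that by (simp add: power_le_zero_eq)
    thus ?thesis using xi01 that by simp
  qed
  have fz: "f' x = 0" if "0 < x" "x \<le> 1" for x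
  proof (rule DERIV_local_min[OF d1[OF that(1)], of "min x (1/2)"])
    show "0 < min x (1/2)" using that by simp
    show "\<forall>z. \<bar>x - z\<bar> < min x (1/2) \<longrightarrow> \<xi> x \<le> \<xi> z"
      using xz that xinn by (auto simp: abs_if)
  qed
  have f2: "f' x = 0" if "2 \<le> x" for x
  proof (rule DERIV_local_max[OF d1, of x 1])
    show "0 < x" "0 < (1::real)" using that by auto
    show "\<forall>z. \<bar>x - z\<bar> < 1 \<longrightarrow> \<xi> z \<le> \<xi> x"
      using xi2 that xile by (auto simp: abs_if)
  qed
  have cf': "continuous_on {1..2} f'"
    by (intro continuous_at_imp_continuous_on ballI) (auto intro!: DERIV_isCont[OF d2])
  obtain M1 where M1: "M1 \<ge> 0" "\<And>x. x\<in>{1..2} \<Longrightarrow> norm (f' x) \<le> M1"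
    using continuous_on_compact_bound[OF compact_Icc cf'] by blast
  have cf'': "continuous_on {1..2} f''"
    by (rule continuous_on_subset[OF C]) auto
  obtain M2 where M2: "M2 \<ge> 0" "\<And>x. x\<in>{1..2} \<Longrightarrow> norm (f'' x) \<le> M2"
    using continuous_on_compact_bound[OF compact_Icc cf''] by blast
  define \<Phi> where "\<Phi> = (\<lambda>d::real. (2+d)*(1+d)*d + 2*M1*((2+d)*(1+d)*2 powr d - 2)
      + M2*(2*((2+d)*2 powr d - 2)))"
  define \<Psi> where "\<Psi> = (\<lambda>d::real. ((2+d)*(1+d)*2 powr d - 2) + 2*((2+d)*2 powr d - 2)*M1)"
  have "(\<Phi> \<longlongrightarrow> \<Phi> 0) (at_right 0)" unfolding \<Phi>_def
    by (intro tendsto_intros) auto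
  hence e1: "\<forall>\<^sub>F d in at_right 0. \<Phi> d < \<epsilon>"
    using assms(2) by (intro order_tendstoD) (auto simp: \<Phi>_def)
  have "(\<Psi> \<longlongrightarrow> \<Psi> 0) (at_right 0)" unfolding \<Psi>_def
    by (intro tendsto_intros) auto
  hence e2: "\<forall>\<^sub>F d in at_right 0. \<Psi> d < 1"
    by (intro order_tendstoD) (auto simp: \<Psi>_def)
  obtain b where b: "b > 0" "\<And>d. d > 0 \<Longrightarrow> d < b \<Longrightarrow> \<Phi> d < \<epsilon> \<and> \<Psi> d < 1"
    using eventually_conj[OF e1 e2] unfolding eventually_at_right_field by auto
  define \<delta> where "\<delta> = min (b/2) (min 1 (2*\<epsilon>))"
  have \<delta>: "0 < \<delta>" "\<delta> \<le> 1" "\<delta> \<le> 2*\<epsilon>" "\<Phi> \<delta> < \<epsilon>" "\<Psi> \<delta> < 1"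
    using b assms(2) unfolding \<delta>_def by auto
  define p where "p = (2::real) powr \<delta>"
  have p1: "1 \<le> p" unfolding p_def using \<delta> by (intro ge_one_powr_ge_zero) auto
  have pp: "2 \<le> (2+\<delta>)*p" using mult_mono[of 2 "2+\<delta>" 1 p] p1 \<delta> by simp
  have pp': "2 \<le> p*(2+\<delta>)" using pp by (simp add: mult.commute)
  have pp2: "2 \<le> (2+\<delta>)*(1+\<delta>)*p" using mult_mono[of 2 "(2+\<delta>)*(1+\<delta>)" 1 p] p1 \<delta>
    mult_mono[of 2 "2+\<delta>" 1 "1+\<delta>"] by simp
  show ?thesis
  proof (intro exI[of _ "2+\<delta>"] conjI ballI allI impI)
    show "2 < 2+\<delta>" using \<delta> by simp
    fix y assume y: "y \<in> {2..2+\<delta>}"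
    hence y2: "2 \<le> y" "y \<le> 2+\<delta>" by auto
    define h where "h x = dzeta \<xi> x y" for x
    have hform: "h x = 2 + (y*(y-1)*x powr (y-2) - 2)*\<xi> x + (y*x powr (y-1) - 2*x)*f' x"
      if "0<x" for x
      unfolding h_def dzeta_def by (rule DERIV_imp_deriv[OF zeta_deriv[where f'=f', OF that d1[OF that]]])
    have h1: "h x = 2" if "0<x" "x\<le>1" for x
      using hform[OF that(1)] xz[of x] fz[OF that] that by simp
    have h3: "h x = y*(y-1)*x powr (y-2)" if "2\<le>x" for x
      using hform[of x] xi2 f2[OF that] that by simp
    have yy: "2 \<le> y*(y-1)" "y*(y-1) \<le> (2+\<delta>)*(1+\<delta>)"
      using mult_mono[of 2 y 1 "y-1"] mult_mono[of y "2+\<delta>" "y-1" "1+\<delta>"] y2 \<delta> by auto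
    have yy0: "0 \<le> y*(y-1)" using yy by linarith
    have qb: "1 \<le> x powr (y-2)" "x powr (y-2) \<le> p" if "1 \<le> x" "x \<le> 2" for x
    proof -
      show "1 \<le> x powr (y-2)" using that y2 by (intro ge_one_powr_ge_zero) auto
      have "x powr (y-2) \<le> 2 powr (y-2)" using that y2 by (intro powr_mono2) auto
      also have "\<dots> \<le> p" unfolding p_def using y2 by (intro powr_mono) auto
      finally show "x powr (y-2) \<le> p" .
    qed
    have bA: "0 \<le> y*(y-1)*x powr (y-2) - 2" "y*(y-1)*x powr (y-2) - 2 \<le> (2+\<delta>)*(1+\<delta>)*p - 2"
      if "1 \<le> x" "x \<le> 2" for x
    proof -
      show "0 \<le> y*(y-1)*x powr (y-2) - 2"
        using mult_mono[OF yy(1) qb(1)[OF that] yy0] by simp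
      show "y*(y-1)*x powr (y-2) - 2 \<le> (2+\<delta>)*(1+\<delta>)*p - 2"
        using mult_mono[OF yy(2) qb(2)[OF that]] yy by simp
    qed
    have bB: "0 \<le> y*x powr (y-1) - 2*x" "y*x powr (y-1) - 2*x \<le> 2*((2+\<delta>)*p - 2)"
      if x: "1 \<le> x" "x \<le> 2" for x
    proof -
      have e: "x powr (y-1) = x * x powr (y-2)"
      proof -
        have "x powr (y-1) = x powr (1 + (y-2))" by simp
        also have "\<dots> = x powr 1 * x powr (y-2)" by (rule powr_add)
        finally show ?thesis using x by simp
      qed
      have y0: "0 \<le> y" using y2 by simp
      have l: "2 \<le> y * x powr (y-2)" using mult_mono[OF y2(1) qb(1)[OF x] y0] by simp
      have u: "y * x powr (y-2) \<le> (2+\<delta>)*p" using mult_mono[OF y2(2) qb(2)[OF x]] \<delta> by simp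
      have eq: "y*x powr (y-1) - 2*x = x * (y * x powr (y-2) - 2)" unfolding e by (simp add: algebra_simps)
      show "0 \<le> y*x powr (y-1) - 2*x" unfolding eq using l x by simp
      show "y*x powr (y-1) - 2*x \<le> 2*((2+\<delta>)*p - 2)" unfolding eq
        using l u x by (intro mult_mono) auto
    qed
    have bA': "0 \<le> y*(y-1)*(y-2)*x powr (y-3)" "y*(y-1)*(y-2)*x powr (y-3) \<le> (2+\<delta>)*(1+\<delta>)*\<delta>"
      if x: "1 \<le> x" "x \<le> 2" for x
    proof -
      have q: "x powr (y-3) \<le> 1" using x y2 \<delta> powr_mono[of "y-3" 0 x] by simp
      show "0 \<le> y*(y-1)*(y-2)*x powr (y-3)" using y2 by simp
      have "y*(y-1)*(y-2) \<le> (2+\<delta>)*(1+\<delta>)*\<delta>" using yy y2 by (intro mult_mono) auto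
      thus "y*(y-1)*(y-2)*x powr (y-3) \<le> (2+\<delta>)*(1+\<delta>)*\<delta>"
        using q mult_mono[of "y*(y-1)*(y-2)" "(2+\<delta>)*(1+\<delta>)*\<delta>" "x powr (y-3)" 1] y2 \<delta> by simp
    qed
    have h2pos: "1 \<le> h x" if x: "1 \<le> x" "x \<le> 2" for x
    proof -
      have xi: "0 \<le> \<xi> x" "\<xi> x \<le> 1" using xinn xile x by auto
      have "0 \<le> (y*(y-1)*x powr (y-2) - 2)*\<xi> x" using bA(1)[OF x] xi by simp
      moreover have "\<bar>(y*x powr (y-1) - 2*x)*f' x\<bar> \<le> (2*((2+\<delta>)*p - 2))*M1"
        unfolding abs_mult using bB[OF x] M1(2)[of x] x M1(1) pp pp' by (intro mult_mono) auto
      moreover have "(2*((2+\<delta>)*p - 2))*M1 \<le> 1"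
        using \<delta>(5) bA[OF x] unfolding \<Psi>_def p_def[symmetric] by (simp add: algebra_simps)
      ultimately show ?thesis using hform[of x] x by (smt (verit))
    qed
    have hpos: "0 < h x" if "0 < x" for x
    proof -
      consider "x \<le> 1" | "1 \<le> x \<and> x \<le> 2" | "2 \<le> x" by linarith
      thus ?thesis
      proof cases
        case 1 thus ?thesis using h1 that by simp
      next
        case 2 thus ?thesis using h2pos[of x] by simp
      next
        case 3 thus ?thesis using h3[OF 3] y2 by simp
      qed
    qed
    define H where "H t = 2 + (y*(y-1)*t powr (y-2) - 2) * \<xi> t + (y * t powr (y-1) - 2*t) * f' t" for t
    define H' where "H' x = y*(y-1)*(y-2)*x powr (y-3) * \<xi> x + 2*(y*(y-1)*x powr (y-2) - 2) * f' x
       + (y * x powr (y-1) - 2*x) * f'' x" for x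
    have Hd: "(H has_real_derivative H' x) (at x)" if "0 < x" for x
      unfolding H_def H'_def by (rule H_deriv[where f'=f' and f''=f'' and \<xi>=\<xi>, OF that d1[OF that] d2[OF that]])
    have H'b: "H' x \<le> \<epsilon>" if x: "1 \<le> x" "x \<le> 2" for x
    proof -
      have xi: "0 \<le> \<xi> x" "\<xi> x \<le> 1" using xinn xile x by auto
      have t1: "y*(y-1)*(y-2)*x powr (y-3) * \<xi> x \<le> (2+\<delta>)*(1+\<delta>)*\<delta>"
        using mult_mono[OF bA'(2)[OF x] xi(2)] bA'[OF x] xi by simp
      have t2: "2*(y*(y-1)*x powr (y-2) - 2) * f' x \<le> 2*M1*((2+\<delta>)*(1+\<delta>)*p - 2)"
      proof -
        have "(y*(y-1)*x powr (y-2) - 2) * f' x \<le> \<bar>(y*(y-1)*x powr (y-2) - 2) * f' x\<bar>" by simp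
        also have "\<dots> \<le> ((2+\<delta>)*(1+\<delta>)*p - 2) * M1"
          unfolding abs_mult using bA[OF x] M1(2)[of x] x M1(1) pp2 by (intro mult_mono) auto
        finally show ?thesis by (simp add: algebra_simps)
      qed
      have t3: "(y * x powr (y-1) - 2*x) * f'' x \<le> M2*(2*((2+\<delta>)*p - 2))"
      proof -
        have "(y * x powr (y-1) - 2*x) * f'' x \<le> \<bar>(y * x powr (y-1) - 2*x) * f'' x\<bar>" by simp
        also have "\<dots> \<le> (2*((2+\<delta>)*p - 2)) * M2"
          unfolding abs_mult using bB[OF x] M2(2)[of x] x M2(1) pp pp' by (intro mult_mono) auto
        finally show ?thesis by (simp add: algebra_simps)
      qed
      have "H' x \<le> \<Phi> \<delta>" unfolding H'_def \<Phi>_def p_def[symmetric] using t1 t2 t3 by linarith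
      thus ?thesis using \<delta>(4) by linarith
    qed
    define G where "G x = sqrt (h x) * x powr (-\<epsilon>)" for x
    have G1: "G x2 \<le> G x1" if "0 < x1" "x1 \<le> x2" "x2 \<le> 1" for x1 x2
      unfolding G_def using that h1[of x1] h1[of x2] assms(2)
      by (intro key_sqrt) (auto intro!: ge_one_powr_ge_zero)
    have G2: "G x2 \<le> G x1" if x: "1 \<le> x1" "x1 \<le> x2" "x2 \<le> 2" for x1 x2
    proof (cases "x1 = x2")
      case True thus ?thesis by simp
    next
      case False
      hence lt: "x1 < x2" using x by simp
      obtain z where z: "x1 < z" "z < x2" "H x2 - H x1 = (x2 - x1) * H' z"
        using MVT2[OF lt, of H H'] Hd x by force
      have "H' z \<le> \<epsilon>" using H'b[of z] z x by simp
      hence "H x2 \<le> H x1 + \<epsilon>*(x2 - x1)" using z(3) lt mult_left_mono[of "H' z" \<epsilon> "x2-x1"] by (simp add: algebra_simps)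
      moreover have "H x1 = h x1" "H x2 = h x2" using hform[of x1] hform[of x2] x unfolding H_def by auto
      ultimately have le: "h x2 \<le> h x1 + \<epsilon>*(x2 - x1)" by simp
      have hx1: "1 \<le> h x1" using h2pos x by simp
      have "h x1 + \<epsilon>*(x2 - x1) \<le> h x1 * (1 + \<epsilon>*(x2-x1))"
        using hx1 mult_right_mono[of 1 "h x1" "\<epsilon>*(x2-x1)"] lt assms(2) by (simp add: algebra_simps)
      also have "\<dots> \<le> h x1 * (x2/x1) powr (2*\<epsilon>)"
        using powr_lower[of x1 x2 \<epsilon>] x assms(2) hx1 by (intro mult_left_mono) auto
      finally show ?thesis unfolding G_def using le x hx1 hpos[of x2]
        by (intro key_sqrt) auto
    qed
    have G3: "G x2 \<le> G x1" if x: "2 \<le> x1" "x1 \<le> x2" for x1 x2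
    proof -
      have e: "x2 powr (y-2) = x1 powr (y-2) * (x2/x1) powr (y-2)"
        using x by (simp add: powr_divide)
      have "(x2/x1) powr (y-2) \<le> (x2/x1) powr (2*\<epsilon>)"
        using x y2 \<delta> by (intro powr_mono) auto
      hence "y*(y-1)*x2 powr (y-2) \<le> y*(y-1)*x1 powr (y-2) * (x2/x1) powr (2*\<epsilon>)"
        unfolding e using y2 yy0 mult_left_mono[of "(x2/x1) powr (y-2)" "(x2/x1) powr (2*\<epsilon>)" "y*(y-1)*x1 powr (y-2)"]
        by (simp add: mult.assoc)
      thus ?thesis unfolding G_def h3[OF x(1)] using x h3[of x2] y2
        by (intro key_sqrt) auto
    qed
    have G: "G x2 \<le> G x1" if x: "0 < x1" "x1 \<le> x2" for x1 x2
    proof -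
      consider "x2 \<le> 1" | "x1 \<le> 1" "1 \<le> x2" "x2 \<le> 2" | "x1 \<le> 1" "2 \<le> x2"
        | "1 \<le> x1" "x2 \<le> 2" | "1 \<le> x1" "x1 \<le> 2" "2 \<le> x2" | "2 \<le> x1" by linarith
      thus ?thesis
      proof cases
        case 1 thus ?thesis using G1 x by simp
      next
        case 2 thus ?thesis using G1[of x1 1] G2[of 1 x2] x by simp
      next
        case 3 thus ?thesis using G1[of x1 1] G2[of 1 2] G3[of 2 x2] x by simp
      next
        case 4 thus ?thesis using G2 x by simp
      next
        case 5 thus ?thesis using G2[of x1 2] G3[of 2 x2] x by simp
      next
        case 6 thus ?thesis using G3 x by simp
      qed
    qed
    fix R x1 x2 :: real
    assume R: "2 < R" and x: "0 < x1 \<and> x1 \<le> x2"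
    have gR: "gR \<xi> R x y = sqrt (h (min x R))" for x unfolding gR_def h_def by simp
    have sR: "0 \<le> sqrt (h R)" using hpos[of R] R by simp
    have dec: "sqrt (h R) * b2 powr (-\<epsilon>) \<le> sqrt (h R) * b1 powr (-\<epsilon>)" if "0 < b1" "b1 \<le> b2" for b1 b2
      using that assms(2) sR by (intro mult_left_mono powr_mono2') auto
    show "gR \<xi> R x2 y * x2 powr (- \<epsilon>) \<le> gR \<xi> R x1 y * x1 powr (- \<epsilon>)"
    proof (cases "x2 \<le> R")
      case True thus ?thesis using G[of x1 x2] x unfolding gR G_def by simp
    next
      case False
      show ?thesis
      proof (cases "R \<le> x1")
        case True thus ?thesis using False dec[of x1 x2] x R unfolding gR by simp
      next
        case F2: False
        have "sqrt (h R) * x2 powr (-\<epsilon>) \<le> G R" unfolding G_def using dec[of R x2] False R by simp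
        also have "\<dots> \<le> G x1" using G[of x1 R] x F2 by simp
        finally show ?thesis using False F2 unfolding gR G_def by simp
      qed
    qed
  qed
qed

end
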